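(* Let $n\geq 1$ and let $\mathcal{F}$ be a sunflower-free collection of subsets of $\{1,2,\dots,n\}$. Then \[ |\mathcal{F}|\leq 3(n+1)\sum_{0\leq k\leq n/3}\binom{n}{k}, \] and consequently \[ \mu_{3}^{S}\leq\frac{3}{2^{2/3}}=1.889881574\dots \]
   Context: Three sets form a (3-)sunflower if the intersection of any two of them is the same set (i.e. $A\cap B=A\cap C=B\cap C$). A family $\mathcal{F}$ of sets is sunflower-free if no three distinct members of $\mathcal{F}$ form a sunflower. Let $F_3(n)$ denote the maximum size of a sunflower-free collection of subsets of $\{1,2,\dots,n\}$, and define the Erdős–Szemerédi sunflower-free capacity $\mu_3^S=\limsup_{n\to\infty}F_3(n)^{1/n}$. *)

theory Defs
  imports "HOL-Analysis.Analysis"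
begin

definition is_sunflower :: "'a set \<Rightarrow> 'a set \<Rightarrow> 'a set \<Rightarrow> bool" where
  "is_sunflower A B C \<longleftrightarrow> A \<inter> B = A \<inter> C \<and> A \<inter> C = B \<inter> C"

definition sunflower_free :: "'a set set \<Rightarrow> bool" where
  "sunflower_free \<F> \<longleftrightarrow>
     (\<forall>A\<in>\<F>. \<forall>B\<in>\<F>. \<forall>C\<in>\<F>. A \<noteq> B \<and> A \<noteq> C \<and> B \<noteq> C \<longrightarrow> \<not> is_sunflower A B C)"

definition F3 :: "nat \<Rightarrow> nat" where
  "F3 n = Max {card \<F> | \<F>. \<F> \<subseteq> Pow {1..n} \<and> sunflower_free \<F>}"

definition mu3S :: ereal where
  "mu3S = limsup (\<lambda>n. ereal (real (F3 n) powr (1 / real n)))"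

end

theory Submission imports Defs "HOL-Real_Asymp.Real_Asymp" begin

definition sr_dec :: "'a set \<Rightarrow> ('a\<Rightarrow>'a\<Rightarrow>'a\<Rightarrow>real) \<Rightarrow> 'i set \<Rightarrow> 'i set \<Rightarrow> 'i set \<Rightarrow> bool" where
 "sr_dec S T IA IB IC \<longleftrightarrow> (\<exists>f g u h w k. \<forall>x\<in>S. \<forall>y\<in>S. \<forall>z\<in>S.
    T x y z = (\<Sum>i\<in>IA. f i x * g i y z) + (\<Sum>j\<in>IB. u j y * h j x z) + (\<Sum>l\<in>IC. w l z * k l x y))"

definition sr_diag :: "'a set \<Rightarrow> ('a\<Rightarrow>'a\<Rightarrow>'a\<Rightarrow>real) \<Rightarrow> bool" where
 "sr_diag S T \<longleftrightarrow> (\<forall>x\<in>S. \<forall>y\<in>S. \<forall>z\<in>S. T x y z \<noteq> 0 \<longrightarrow> x = y \<and> y = z) \<and> (\<forall>x\<in>S. T x x x \<noteq> 0)"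

lemma sr_diag_subset: "sr_diag S T \<Longrightarrow> S' \<subseteq> S \<Longrightarrow> sr_diag S' T"
  unfolding sr_diag_def by blast

lemma sr_diag_swap12: "sr_diag S T \<Longrightarrow> sr_diag S (\<lambda>x y z. T y x z)"
  unfolding sr_diag_def by metis

lemma sr_diag_swap13: "sr_diag S T \<Longrightarrow> sr_diag S (\<lambda>x y z. T z y x)"
  unfolding sr_diag_def by metis

lemma sr_dec_swap12: "sr_dec S T IA IB IC \<Longrightarrow> sr_dec S (\<lambda>x y z. T y x z) IB IA IC"
proof -
  assume "sr_dec S T IA IB IC"
  then obtain f g u h w k where E: "\<forall>x\<in>S. \<forall>y\<in>S. \<forall>z\<in>S.
    T x y z = (\<Sum>i\<in>IA. f i x * g i y z) + (\<Sum>j\<in>IB. u j y * h j x z) + (\<Sum>l\<in>IC. w l z * k l x y)"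
    unfolding sr_dec_def by blast
  show ?thesis unfolding sr_dec_def
    apply (rule exI[of _ u], rule exI[of _ h], rule exI[of _ f], rule exI[of _ g], rule exI[of _ w],
           rule exI[of _ "\<lambda>l x y. k l y x"])
    using E by (simp add: algebra_simps)
qed

lemma sr_dec_swap13: "sr_dec S T IA IB IC \<Longrightarrow> sr_dec S (\<lambda>x y z. T z y x) IC IB IA"
proof -
  assume "sr_dec S T IA IB IC"
  then obtain f g u h w k where E: "\<forall>x\<in>S. \<forall>y\<in>S. \<forall>z\<in>S.
    T x y z = (\<Sum>i\<in>IA. f i x * g i y z) + (\<Sum>j\<in>IB. u j y * h j x z) + (\<Sum>l\<in>IC. w l z * k l x y)"
    unfolding sr_dec_def by blast
  show ?thesis unfolding sr_dec_def
    apply (rule exI[of _ w], rule exI[of _ "\<lambda>l y z. k l z y"], rule exI[of _ u], rule exI[of _ "\<lambda>j x z. h j z x"], rule exI[of _ f],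
           rule exI[of _ "\<lambda>i x y. g i y x"])
    using E by (simp add: algebra_simps)
qed

lemma sr_dec_reduce:
  assumes D: "sr_dec S T IA IB IC" and i0: "i0 \<in> IA" and fin: "finite IA" "finite S" and dg: "sr_diag S T"
  shows "\<exists>S'\<subseteq>S. card S \<le> Suc (card S') \<and> sr_dec S' T (IA - {i0}) IB IC"
proof -
  obtain f g u h w k where E: "\<forall>x\<in>S. \<forall>y\<in>S. \<forall>z\<in>S.
    T x y z = (\<Sum>i\<in>IA. f i x * g i y z) + (\<Sum>j\<in>IB. u j y * h j x z) + (\<Sum>l\<in>IC. w l z * k l x y)"
    using D unfolding sr_dec_def by blast
  have split: "(\<Sum>i\<in>IA. F i) = F i0 + (\<Sum>i\<in>IA-{i0}. F i)" for F :: "_ \<Rightarrow> real"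
    using fin(1) i0 by (simp add: sum.remove)
  show ?thesis
  proof (cases "\<forall>x\<in>S. f i0 x = 0")
    case True
    have "sr_dec S T (IA - {i0}) IB IC" unfolding sr_dec_def
      apply (rule exI[of _ f], rule exI[of _ g], rule exI[of _ u], rule exI[of _ h], rule exI[of _ w], rule exI[of _ k])
      using E True split by simp
    then show ?thesis by auto
  next
    case False
    then obtain s where s: "s \<in> S" "f i0 s \<noteq> 0" by blast
    define r where "r x = f i0 x / f i0 s" for x
    have "sr_dec (S - {s}) T (IA - {i0}) IB IC" unfolding sr_dec_def
    proof (rule exI[of _ "\<lambda>i x. f i x - r x * f i s"], rule exI[of _ g], rule exI[of _ u],
           rule exI[of _ "\<lambda>j x z. h j x z - r x * h j s z"], rule exI[of _ w],
           rule exI[of _ "\<lambda>l x y. k l x y - r x * k l s y"], intro ballI)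
      fix x y z assume xyz: "x \<in> S - {s}" "y \<in> S - {s}" "z \<in> S - {s}"
      have "T s y z = 0" using dg xyz s unfolding sr_diag_def by blast
      hence "T x y z = T x y z - r x * T s y z" by simp
      also have "\<dots> = (\<Sum>i\<in>IA. (f i x - r x * f i s) * g i y z) + (\<Sum>j\<in>IB. u j y * (h j x z - r x * h j s z))
          + (\<Sum>l\<in>IC. w l z * (k l x y - r x * k l s y))"
        using E xyz s by (simp add: algebra_simps sum_subtractf sum_distrib_left)
      also have "(\<Sum>i\<in>IA. (f i x - r x * f i s) * g i y z) = (\<Sum>i\<in>IA-{i0}. (f i x - r x * f i s) * g i y z)"
        using split s by (simp add: r_def)
      finally show "T x y z = (\<Sum>i\<in>IA - {i0}. (f i x - r x * f i s) * g i y z) +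
          (\<Sum>j\<in>IB. u j y * (h j x z - r x * h j s z)) + (\<Sum>l\<in>IC. w l z * (k l x y - r x * k l s y))" .
    qed
    moreover have "card S \<le> Suc (card (S - {s}))" using s fin by (simp add: card_Suc_Diff1)
    ultimately show ?thesis by blast
  qed
qed

lemma sr_main:
  "finite S \<Longrightarrow> finite IA \<Longrightarrow> finite IB \<Longrightarrow> finite IC \<Longrightarrow> sr_diag S T \<Longrightarrow> sr_dec S T IA IB IC
   \<Longrightarrow> card S \<le> card IA + card IB + card IC"
proof (induction "card IA + card IB + card IC" arbitrary: S T IA IB IC rule: less_induct)
  case less
  show ?case
  proof (cases "IA = {}")
    case False
    then obtain i0 where i0: "i0 \<in> IA" by blast
    obtain S' where S': "S' \<subseteq> S" "card S \<le> Suc (card S')" "sr_dec S' T (IA - {i0}) IB IC"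
      using sr_dec_reduce[OF less.prems(6) i0 less.prems(2,1,5)] by blast
    have c: "card (IA - {i0}) = card IA - 1" "card IA \<ge> 1" using i0 less.prems(2)
      by (auto simp: card_gt_0_iff Suc_le_eq)
    have "card S' \<le> card (IA - {i0}) + card IB + card IC"
      apply (rule less.hyps)
      using c less.prems S' by (auto intro: finite_subset sr_diag_subset)
    then show ?thesis using S' c by linarith
  next
    case IA: True
    show ?thesis
    proof (cases "IB = {}")
      case False
      then obtain i0 where i0: "i0 \<in> IB" by blast
      obtain S' where S': "S' \<subseteq> S" "card S \<le> Suc (card S')" "sr_dec S' (\<lambda>x y z. T y x z) (IB - {i0}) IA IC"
        using sr_dec_reduce[OF sr_dec_swap12[OF less.prems(6)] i0 less.prems(3,1) sr_diag_swap12[OF less.prems(5)]] by blast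
      have c: "card (IB - {i0}) = card IB - 1" "card IB \<ge> 1" using i0 less.prems(3)
        by (auto simp: card_gt_0_iff Suc_le_eq)
      have "card S' \<le> card (IB - {i0}) + card IA + card IC"
        apply (rule less.hyps)
        using c less.prems S' IA by (auto intro: finite_subset sr_diag_subset sr_diag_swap12)
      then show ?thesis using S' c IA by simp
    next
      case IB: True
      show ?thesis
      proof (cases "IC = {}")
        case False
        then obtain i0 where i0: "i0 \<in> IC" by blast
        obtain S' where S': "S' \<subseteq> S" "card S \<le> Suc (card S')" "sr_dec S' (\<lambda>x y z. T z y x) (IC - {i0}) IB IA"
          using sr_dec_reduce[OF sr_dec_swap13[OF less.prems(6)] i0 less.prems(4,1) sr_diag_swap13[OF less.prems(5)]] by blast
        have c: "card (IC - {i0}) = card IC - 1" "card IC \<ge> 1" using i0 less.prems(4)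
          by (auto simp: card_gt_0_iff Suc_le_eq)
        have "card S' \<le> card (IC - {i0}) + card IB + card IA"
          apply (rule less.hyps)
          using c less.prems S' IA IB by (auto intro: finite_subset sr_diag_subset sr_diag_swap13)
        then show ?thesis using S' c IA IB by simp
      next
        case IC: True
        have "S = {}"
          using less.prems(5,6) IA IB IC unfolding sr_dec_def sr_diag_def by auto
        then show ?thesis by simp
      qed
    qed
  qed
qed



lemma expand3:
  fixes a b c :: "nat \<Rightarrow> real"
  assumes I: "finite I"
  shows "(\<Prod>i\<in>I. 2 - a i - b i - c i) =
    (\<Sum>X\<in>Pow I. \<Sum>Y\<in>Pow I. \<Sum>Z\<in>Pow I. (\<Prod>i\<in>X. - a i) * (\<Prod>i\<in>Y. - b i) * (\<Prod>i\<in>Z. - c i) *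
       (if X \<inter> Y = {} \<and> X \<inter> Z = {} \<and> Y \<inter> Z = {} then 2 ^ card (I - X - Y - Z) else 0))"
proof -
  have e1: "(\<Prod>i\<in>J. - c i + 2) = (\<Sum>Z\<in>Pow J. (\<Prod>i\<in>Z. - c i) * 2 ^ card (J - Z))" if "finite J" for J
    using prod_add[OF that, of "\<lambda>i. - c i" "\<lambda>_. 2"] by simp
  have e2: "(\<Prod>i\<in>J. - b i + (- c i + 2)) = (\<Sum>Y\<in>Pow J. (\<Prod>i\<in>Y. - b i) *
      (\<Sum>Z\<in>Pow (J - Y). (\<Prod>i\<in>Z. - c i) * 2 ^ card (J - Y - Z)))" if "finite J" for J
    using prod_add[OF that, of "\<lambda>i. - b i" "\<lambda>i. - c i + 2"] that e1 by simp
  have "(\<Prod>i\<in>I. 2 - a i - b i - c i) = (\<Prod>i\<in>I. - a i + (- b i + (- c i + 2)))"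
    by (simp add: algebra_simps)
  also have "\<dots> = (\<Sum>X\<in>Pow I. (\<Prod>i\<in>X. - a i) * (\<Sum>Y\<in>Pow (I - X). (\<Prod>i\<in>Y. - b i) *
      (\<Sum>Z\<in>Pow (I - X - Y). (\<Prod>i\<in>Z. - c i) * 2 ^ card (I - X - Y - Z))))"
    using prod_add[OF I, of "\<lambda>i. - a i" "\<lambda>i. - b i + (- c i + 2)"] e2 I by simp
  also have "\<dots> = (\<Sum>X\<in>Pow I. \<Sum>Y\<in>Pow I. \<Sum>Z\<in>Pow I. (\<Prod>i\<in>X. - a i) * (\<Prod>i\<in>Y. - b i) * (\<Prod>i\<in>Z. - c i) *
       (if X \<inter> Y = {} \<and> X \<inter> Z = {} \<and> Y \<inter> Z = {} then 2 ^ card (I - X - Y - Z) else 0))"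
  proof (rule sum.cong[OF refl])
    fix X assume X: "X \<in> Pow I"
    have inner: "(\<Sum>Z\<in>Pow (I - X - Y). (\<Prod>i\<in>Z. - c i) * 2 ^ card (I - X - Y - Z)) =
       (\<Sum>Z\<in>Pow I. (\<Prod>i\<in>Z. - c i) *
       (if X \<inter> Y = {} \<and> X \<inter> Z = {} \<and> Y \<inter> Z = {} then 2 ^ card (I - X - Y - Z) else 0))"
      if Y: "Y \<in> Pow (I - X)" for Y
      apply (rule sum.mono_neutral_cong_left)
      using I Y by auto
    have "(\<Sum>Y\<in>Pow (I - X). (\<Prod>i\<in>Y. - b i) *
      (\<Sum>Z\<in>Pow (I - X - Y). (\<Prod>i\<in>Z. - c i) * 2 ^ card (I - X - Y - Z))) =
      (\<Sum>Y\<in>Pow I. (\<Prod>i\<in>Y. - b i) * (\<Sum>Z\<in>Pow I. (\<Prod>i\<in>Z. - c i) *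
       (if X \<inter> Y = {} \<and> X \<inter> Z = {} \<and> Y \<inter> Z = {} then 2 ^ card (I - X - Y - Z) else 0)))"
    proof (rule sum.mono_neutral_cong_left)
      show "\<forall>Y\<in>Pow I - Pow (I - X). (\<Prod>i\<in>Y. - b i) * (\<Sum>Z\<in>Pow I. (\<Prod>i\<in>Z. - c i) *
       (if X \<inter> Y = {} \<and> X \<inter> Z = {} \<and> Y \<inter> Z = {} then 2 ^ card (I - X - Y - Z) else 0)) = 0"
      proof
        fix Y assume "Y \<in> Pow I - Pow (I - X)"
        then have "X \<inter> Y \<noteq> {}" by auto
        then show "(\<Prod>i\<in>Y. - b i) * (\<Sum>Z\<in>Pow I. (\<Prod>i\<in>Z. - c i) *
          (if X \<inter> Y = {} \<and> X \<inter> Z = {} \<and> Y \<inter> Z = {} then 2 ^ card (I - X - Y - Z) else 0)) = 0" by simp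
      qed
    qed (use I inner in auto)
    then show "(\<Prod>i\<in>X. - a i) * (\<Sum>Y\<in>Pow (I - X). (\<Prod>i\<in>Y. - b i) *
      (\<Sum>Z\<in>Pow (I - X - Y). (\<Prod>i\<in>Z. - c i) * 2 ^ card (I - X - Y - Z))) =
      (\<Sum>Y\<in>Pow I. \<Sum>Z\<in>Pow I. (\<Prod>i\<in>X. - a i) * (\<Prod>i\<in>Y. - b i) * (\<Prod>i\<in>Z. - c i) *
       (if X \<inter> Y = {} \<and> X \<inter> Z = {} \<and> Y \<inter> Z = {} then 2 ^ card (I - X - Y - Z) else 0))"
      by (simp add: sum_distrib_left mult_ac)
  qed
  finally show ?thesis .
qed


definition ind :: "nat set \<Rightarrow> nat \<Rightarrow> real" where "ind A i = (if i \<in> A then 1 else 0)"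

definition tens :: "nat set \<Rightarrow> nat set \<Rightarrow> nat set \<Rightarrow> nat set \<Rightarrow> real" where
  "tens I A B C = (\<Prod>i\<in>I. 2 - ind A i - ind B i - ind C i)"

lemma card3_le:
  assumes "X \<subseteq> I" "Y \<subseteq> I" "Z \<subseteq> I" "X \<inter> Y = {}" "X \<inter> Z = {}" "Y \<inter> Z = {}" "finite I"
  shows "card X + card Y + card Z \<le> card I"
proof -
  have f: "finite X" "finite Y" "finite Z" using assms finite_subset by blast+
  have "card (X \<union> Y \<union> Z) = card X + card Y + card Z"
    using f assms by (simp add: card_Un_disjoint Int_Un_distrib2)
  moreover have "card (X \<union> Y \<union> Z) \<le> card I" using assms by (intro card_mono) auto
  ultimately show ?thesis by simp
qed

lemma tens_dec:
  assumes I: "finite I"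
  shows "sr_dec S (tens I) {X\<in>Pow I. 3 * card X \<le> card I} {X\<in>Pow I. 3 * card X \<le> card I} {X\<in>Pow I. 3 * card X \<le> card I}"
proof -
  define P where "P = Pow I"
  define L where "L = {X\<in>Pow I. 3 * card X \<le> card I}"
  define H where "H = P - L"
  define phi where "phi X A = (\<Prod>i\<in>X. - ind A i)" for X A
  define psi where "psi X Y Z = (if X \<inter> Y = {} \<and> X \<inter> Z = {} \<and> Y \<inter> Z = {} then 2 ^ card (I - X - Y - Z) else 0::real)" for X Y Z
  have fP: "finite P" "finite L" "finite H" using I by (auto simp: P_def L_def H_def)
  have LP: "L \<subseteq> P" by (auto simp: P_def L_def)
  have split: "(\<Sum>X\<in>P. G X) = (\<Sum>X\<in>L. G X) + (\<Sum>X\<in>H. G X)" for G :: "nat set \<Rightarrow> real"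
    using sum.subset_diff[OF LP fP(1)] unfolding H_def by (simp add: add.commute)
  have psi0: "psi X Y Z = 0" if "X \<in> H" "Y \<in> H" "Z \<in> H" for X Y Z
  proof (rule ccontr)
    assume "psi X Y Z \<noteq> 0"
    then have d: "X \<inter> Y = {}" "X \<inter> Z = {}" "Y \<inter> Z = {}" unfolding psi_def by (auto split: if_splits)
    have "card X + card Y + card Z \<le> card I"
      using card3_le[OF _ _ _ d I] that by (auto simp: H_def P_def)
    moreover have "3 * card X > card I" "3 * card Y > card I" "3 * card Z > card I"
      using that by (auto simp: H_def P_def L_def)
    ultimately show False by linarith
  qed
  show ?thesis unfolding L_def[symmetric] sr_dec_def
  proof (rule exI[of _ phi], rule exI[of _ "\<lambda>X B C. \<Sum>Y\<in>P. \<Sum>Z\<in>P. phi Y B * phi Z C * psi X Y Z"],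
      rule exI[of _ phi], rule exI[of _ "\<lambda>Y A C. \<Sum>X\<in>H. \<Sum>Z\<in>P. phi X A * phi Z C * psi X Y Z"],
      rule exI[of _ phi], rule exI[of _ "\<lambda>Z A B. \<Sum>X\<in>H. \<Sum>Y\<in>H. phi X A * phi Y B * psi X Y Z"], intro ballI)
    fix A B C assume "A \<in> S" "B \<in> S" "C \<in> S"
    let ?F = "\<lambda>X Y Z. phi X A * phi Y B * phi Z C * psi X Y Z"
    have "tens I A B C = (\<Sum>X\<in>P. \<Sum>Y\<in>P. \<Sum>Z\<in>P. ?F X Y Z)"
      unfolding tens_def expand3[OF I] P_def phi_def psi_def by (simp add: mult_ac)
    also have "\<dots> = (\<Sum>X\<in>L. \<Sum>Y\<in>P. \<Sum>Z\<in>P. ?F X Y Z) + (\<Sum>X\<in>H. \<Sum>Y\<in>L. \<Sum>Z\<in>P. ?F X Y Z)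
        + (\<Sum>X\<in>H. \<Sum>Y\<in>H. \<Sum>Z\<in>P. ?F X Y Z)"
    proof -
      have "(\<Sum>X\<in>H. \<Sum>Y\<in>P. \<Sum>Z\<in>P. ?F X Y Z) = (\<Sum>X\<in>H. (\<Sum>Y\<in>L. \<Sum>Z\<in>P. ?F X Y Z) + (\<Sum>Y\<in>H. \<Sum>Z\<in>P. ?F X Y Z))"
        by (rule sum.cong[OF refl], rule split)
      then show ?thesis
        using split[of "\<lambda>X. \<Sum>Y\<in>P. \<Sum>Z\<in>P. ?F X Y Z"] by (simp add: sum.distrib)
    qed
    also have "(\<Sum>X\<in>H. \<Sum>Y\<in>H. \<Sum>Z\<in>P. ?F X Y Z) = (\<Sum>X\<in>H. \<Sum>Y\<in>H. \<Sum>Z\<in>L. ?F X Y Z)"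
    proof (rule sum.cong[OF refl], rule sum.cong[OF refl])
      fix X Y assume XY: "X \<in> H" "Y \<in> H"
      have "(\<Sum>Z\<in>H. ?F X Y Z) = 0" using psi0[OF XY] by simp
      then show "(\<Sum>Z\<in>P. ?F X Y Z) = (\<Sum>Z\<in>L. ?F X Y Z)" by (simp add: split)
    qed
    also have "(\<Sum>X\<in>L. \<Sum>Y\<in>P. \<Sum>Z\<in>P. ?F X Y Z) = (\<Sum>X\<in>L. phi X A * (\<Sum>Y\<in>P. \<Sum>Z\<in>P. phi Y B * phi Z C * psi X Y Z))"
      by (simp add: sum_distrib_left mult_ac)
    also have "(\<Sum>X\<in>H. \<Sum>Y\<in>L. \<Sum>Z\<in>P. ?F X Y Z) = (\<Sum>Y\<in>L. phi Y B * (\<Sum>X\<in>H. \<Sum>Z\<in>P. phi X A * phi Z C * psi X Y Z))"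
      by (subst sum.swap) (simp add: sum_distrib_left mult_ac)
    also have "(\<Sum>X\<in>H. \<Sum>Y\<in>H. \<Sum>Z\<in>L. ?F X Y Z) = (\<Sum>Z\<in>L. phi Z C * (\<Sum>X\<in>H. \<Sum>Y\<in>H. phi X A * phi Y B * psi X Y Z))"
    proof -
      have "(\<Sum>X\<in>H. \<Sum>Y\<in>H. \<Sum>Z\<in>L. ?F X Y Z) = (\<Sum>X\<in>H. \<Sum>Z\<in>L. \<Sum>Y\<in>H. ?F X Y Z)"
        by (rule sum.cong[OF refl], rule sum.swap)
      also have "\<dots> = (\<Sum>Z\<in>L. \<Sum>X\<in>H. \<Sum>Y\<in>H. ?F X Y Z)" by (rule sum.swap)
      finally show ?thesis by (simp add: sum_distrib_left mult_ac)
    qed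
    finally show "tens I A B C = (\<Sum>X\<in>L. phi X A * (\<Sum>Y\<in>P. \<Sum>Z\<in>P. phi Y B * phi Z C * psi X Y Z)) +
       (\<Sum>Y\<in>L. phi Y B * (\<Sum>X\<in>H. \<Sum>Z\<in>P. phi X A * phi Z C * psi X Y Z)) +
       (\<Sum>Z\<in>L. phi Z C * (\<Sum>X\<in>H. \<Sum>Y\<in>H. phi X A * phi Y B * psi X Y Z))" .
  qed
qed


lemma tens_nz_iff:
  assumes "finite I"
  shows "tens I A B C \<noteq> 0 \<longleftrightarrow> (\<forall>i\<in>I. ind A i + ind B i + ind C i \<noteq> 2)"
  unfolding tens_def using assms by (auto simp: prod_zero_iff algebra_simps)

lemma tens_diag:
  assumes FI: "F \<subseteq> Pow I" and I: "finite I" and sf: "sunflower_free F" and ck: "\<forall>A\<in>F. card A = k"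
  shows "sr_diag F (tens I)"
  unfolding sr_diag_def
proof (rule conjI[rotated]; intro ballI impI)
  fix A assume "A \<in> F"
  show "tens I A A A \<noteq> 0" unfolding tens_nz_iff[OF I] by (auto simp: ind_def)
next
  fix A B C assume ABC: "A \<in> F" "B \<in> F" "C \<in> F" and nz: "tens I A B C \<noteq> 0"
  have sub: "A \<subseteq> I" "B \<subseteq> I" "C \<subseteq> I" using ABC FI by auto
  have fin: "finite A" "finite B" "finite C" using sub I finite_subset by blast+
  have cards: "card A = k" "card B = k" "card C = k" using ABC ck by auto
  have no2: "\<forall>i\<in>I. ind A i + ind B i + ind C i \<noteq> 2" using nz tens_nz_iff[OF I] by blast
  have two: "(x\<in>A \<and> x\<in>B \<longrightarrow> x\<in>C) \<and> (x\<in>A \<and> x\<in>C \<longrightarrow> x\<in>B) \<and> (x\<in>B \<and> x\<in>C \<longrightarrow> x\<in>A)" for x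
  proof (cases "x \<in> I")
    case True
    then have "ind A x + ind B x + ind C x \<noteq> 2" using no2 by blast
    then show ?thesis by (auto simp: ind_def split: if_splits)
  next
    case False
    then show ?thesis using sub by auto
  qed
  have sfl: "is_sunflower A B C"
    unfolding is_sunflower_def using two by blast
  show "A = B \<and> B = C"
  proof (rule ccontr)
    assume ne: "\<not> (A = B \<and> B = C)"
    have "A \<noteq> B \<and> A \<noteq> C \<and> B \<noteq> C"
    proof (intro conjI notI)
      assume "A = B"
      then have "A \<subseteq> C" using sfl unfolding is_sunflower_def by auto
      then have "A = C" using card_subset_eq fin cards by metis
      then show False using ne \<open>A = B\<close> by simp
    next
      assume "A = C"
      then have "A \<subseteq> B" using sfl unfolding is_sunflower_def by auto
      then have "A = B" using card_subset_eq fin cards by metis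
      then show False using ne \<open>A = C\<close> by simp
    next
      assume "B = C"
      then have "B \<subseteq> A" using sfl unfolding is_sunflower_def by auto
      then have "A = B" using card_subset_eq fin cards by metis
      then show False using ne \<open>B = C\<close> by simp
    qed
    then show False using sf sfl ABC unfolding sunflower_free_def by blast
  qed
qed

lemma card_L:
  "card {X\<in>Pow {1..n::nat}. 3 * card X \<le> n} = (\<Sum>k\<in>{k::nat. real k \<le> real n / 3}. n choose k)"
proof -
  have K: "{k::nat. real k \<le> real n / 3} = {k. 3 * k \<le> n}" by auto
  have fK: "finite {k::nat. 3 * k \<le> n}" by (rule finite_subset[of _ "{..n}"]) auto
  have "{X\<in>Pow {1..n::nat}. 3 * card X \<le> n} = (\<Union>k\<in>{k. 3 * k \<le> n}. {X. X \<subseteq> {1..n} \<and> card X = k})"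
    by auto
  then have "card {X\<in>Pow {1..n::nat}. 3 * card X \<le> n} = (\<Sum>k\<in>{k. 3 * k \<le> n}. card {X. X \<subseteq> {1..n} \<and> card X = k})"
    apply simp
    apply (rule card_UN_disjoint)
    using fK by auto
  also have "\<dots> = (\<Sum>k\<in>{k. 3 * k \<le> n}. n choose k)" by (simp add: n_subsets)
  finally show ?thesis using K by simp
qed

lemma sf_subset: "sunflower_free F \<Longrightarrow> G \<subseteq> F \<Longrightarrow> sunflower_free G"
  unfolding sunflower_free_def by blast

lemma main_bound:
  assumes FI: "F \<subseteq> Pow {1..n::nat}" and sf: "sunflower_free F"
  shows "card F \<le> (n + 1) * (3 * card {X\<in>Pow {1..n}. 3 * card X \<le> n})"
proof -
  let ?I = "{1..n}"
  let ?L = "{X\<in>Pow ?I. 3 * card X \<le> card ?I}"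
  define Fk where "Fk k = {A\<in>F. card A = k}" for k
  have fF: "finite F" using FI finite_subset by (metis finite_Pow_iff finite_atLeastAtMost)
  have each: "card (Fk k) \<le> 3 * card ?L" for k
  proof -
    have "card (Fk k) \<le> card ?L + card ?L + card ?L"
      apply (rule sr_main[OF _ _ _ _ tens_diag[where k=k] tens_dec])
      using fF FI sf by (auto simp: Fk_def intro: sf_subset)
    then show ?thesis by simp
  qed
  have "F = (\<Union>k\<in>{0..n}. Fk k)"
  proof -
    have "card A \<le> n" if "A \<in> F" for A
      using that FI card_mono[of ?I A] by auto
    then show ?thesis by (auto simp: Fk_def)
  qed
  then have "card F \<le> (\<Sum>k\<in>{0..n}. card (Fk k))" using card_UN_le[of "{0..n}" Fk] by simp
  also have "\<dots> \<le> (\<Sum>k\<in>{0..n}. 3 * card ?L)" by (rule sum_mono, rule each)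
  finally show ?thesis by simp
qed


lemma pw: "2 powr (real n / 3) * (3/2)^n = (3 / 2 powr (2/3) :: real)^n"
proof -
  have a: "(2::real) powr (real n / 3) * 2 powr (real n * (2/3)) = 2 ^ n"
    by (simp add: powr_add[symmetric] powr_realpow[symmetric])
  have b: "(3 / 2 powr (2/3) :: real)^n = 3^n / 2 powr (real n * (2/3))"
    by (simp add: power_divide powr_power)
  have p: "(2::real) powr (real n * (2/3)) > 0" by simp
  show ?thesis unfolding b using a p
    by (simp add: power_divide field_simps)
qed

lemma pw2: "(2::real) powr (real n / 3 - real k) = 2 powr (real n / 3) * (1/2)^k"
proof -
  have "(2::real) powr (real n / 3 - real k) = 2 powr (real n / 3) / 2 powr (real k)"
    by (rule powr_diff)
  also have "(2::real) powr (real k) = 2 ^ k" by (rule powr_realpow) simp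
  finally show ?thesis by (simp only: power_one_over divide_inverse mult_1 power_inverse)
qed

lemma binom_bound:
  "(\<Sum>k\<in>{k::nat. real k \<le> real n / 3}. real (n choose k)) \<le> (3 / 2 powr (2/3))^n"
proof -
  let ?K = "{k::nat. real k \<le> real n / 3}"
  have Kn: "?K \<subseteq> {..n}" by auto
  have "(\<Sum>k\<in>?K. real (n choose k)) \<le> (\<Sum>k\<in>?K. real (n choose k) * 2 powr (real n / 3 - real k))"
  proof (rule sum_mono)
    fix k assume "k \<in> ?K"
    then have "1 \<le> (2::real) powr (real n / 3 - real k)" by (intro ge_one_powr_ge_zero) auto
    then show "real (n choose k) \<le> real (n choose k) * 2 powr (real n / 3 - real k)"
      by (metis mult.right_neutral mult_left_mono of_nat_0_le_iff)
  qed
  also have "\<dots> \<le> (\<Sum>k\<in>{..n}. real (n choose k) * 2 powr (real n / 3 - real k))"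
    by (rule sum_mono2) (use Kn in auto)
  also have "\<dots> = 2 powr (real n / 3) * (\<Sum>k\<in>{..n}. real (n choose k) * (1/2)^k * 1^(n-k))"
    by (simp add: pw2 sum_distrib_left mult_ac)
  also have "\<dots> = 2 powr (real n / 3) * (1/2 + 1)^n"
    unfolding binomial_ring by simp
  also have "\<dots> = (3 / 2 powr (2/3))^n" using pw by simp
  finally show ?thesis .
qed

lemma lim1: "(\<lambda>n. (3 * (real n + 1)) powr (1 / real n)) \<longlonglongrightarrow> 1"
  by real_asymp


lemma F3_bound: "real (F3 n) \<le> 3 * (real n + 1) * (3 / 2 powr (2/3))^n"
proof -
  let ?M = "{card \<F> | \<F>. \<F> \<subseteq> Pow {1..n} \<and> sunflower_free \<F>}"
  have fin: "finite ?M"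
    by (rule finite_subset[of _ "card ` Pow (Pow {1..n})"]) auto
  have ne: "?M \<noteq> {}" using sf_subset[of "{}"] unfolding sunflower_free_def by auto
  have "F3 n \<in> ?M" unfolding F3_def using Max_in[OF fin ne] .
  then obtain F where F: "F3 n = card F" "F \<subseteq> Pow {1..n}" "sunflower_free F" by blast
  have "card F \<le> (n + 1) * (3 * (\<Sum>k\<in>{k::nat. real k \<le> real n / 3}. n choose k))"
    using main_bound[OF F(2,3)] card_L by simp
  then have "real (card F) \<le> real ((n + 1) * (3 * (\<Sum>k\<in>{k::nat. real k \<le> real n / 3}. n choose k)))"
    by (simp only: of_nat_le_iff)
  also have "\<dots> = 3 * (real n + 1) * (\<Sum>k\<in>{k::nat. real k \<le> real n / 3}. real (n choose k))"
    by (simp add: of_nat_sum algebra_simps)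
  also have "\<dots> \<le> 3 * (real n + 1) * (3 / 2 powr (2/3))^n"
    by (rule mult_left_mono[OF binom_bound]) simp
  finally show ?thesis using F by simp
qed

theorem theorem1p3:
  shows "(\<forall>n::nat. \<forall>\<F>::nat set set. n \<ge> 1 \<and> \<F> \<subseteq> Pow {1..n} \<and> sunflower_free \<F> \<longrightarrow>
            real (card \<F>) \<le> 3 * (real n + 1) * (\<Sum>k\<in>{k::nat. real k \<le> real n / 3}. real (n choose k)))
         \<and> mu3S \<le> ereal (3 / 2 powr (2/3))"
proof
  show "\<forall>n::nat. \<forall>\<F>::nat set set. n \<ge> 1 \<and> \<F> \<subseteq> Pow {1..n} \<and> sunflower_free \<F> \<longrightarrow>
            real (card \<F>) \<le> 3 * (real n + 1) * (\<Sum>k\<in>{k::nat. real k \<le> real n / 3}. real (n choose k))"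
  proof (intro allI impI)
    fix n :: nat and F :: "nat set set"
    assume a: "n \<ge> 1 \<and> F \<subseteq> Pow {1..n} \<and> sunflower_free F"
    have "card F \<le> (n + 1) * (3 * (\<Sum>k\<in>{k::nat. real k \<le> real n / 3}. n choose k))"
      using main_bound[of F n] a card_L by simp
    then have "real (card F) \<le> real ((n + 1) * (3 * (\<Sum>k\<in>{k::nat. real k \<le> real n / 3}. n choose k)))"
      by (simp only: of_nat_le_iff)
    also have "\<dots> = 3 * (real n + 1) * (\<Sum>k\<in>{k::nat. real k \<le> real n / 3}. real (n choose k))"
      by (simp add: of_nat_sum algebra_simps)
    finally show "real (card F) \<le> 3 * (real n + 1) * (\<Sum>k\<in>{k::nat. real k \<le> real n / 3}. real (n choose k))" .
  qed
next
  define \<beta> :: real where "\<beta> = 3 / 2 powr (2/3)"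
  have bpos: "\<beta> > 0" unfolding \<beta>_def by simp
  define b where "b n = (3 * (real n + 1)) powr (1 / real n) * \<beta>" for n :: nat
  have ev: "eventually (\<lambda>n. ereal (real (F3 n) powr (1 / real n)) \<le> ereal (b n)) sequentially"
    using eventually_ge_at_top[of "1::nat"]
  proof (rule eventually_mono)
    fix n :: nat assume n: "n \<ge> 1"
    have "real (F3 n) powr (1 / real n) \<le> (3 * (real n + 1) * \<beta>^n) powr (1 / real n)"
      by (rule powr_mono2) (use F3_bound[of n] in \<open>auto simp: \<beta>_def\<close>)
    also have "\<dots> = (3 * (real n + 1)) powr (1 / real n) * (\<beta>^n) powr (1 / real n)"
      using bpos by (simp add: powr_mult)
    also have "(\<beta>^n) powr (1 / real n) = \<beta>"
      using bpos n by (simp add: powr_realpow[symmetric] powr_powr)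
    finally show "ereal (real (F3 n) powr (1 / real n)) \<le> ereal (b n)" by (simp add: b_def)
  qed
  have lim: "b \<longlonglongrightarrow> 1 * \<beta>"
    unfolding b_def by (intro tendsto_mult tendsto_const lim1)
  have "mu3S \<le> limsup (\<lambda>n. ereal (b n))"
    unfolding mu3S_def by (rule Limsup_mono[OF ev])
  also have "\<dots> = ereal \<beta>"
    by (rule lim_imp_Limsup) (use lim in auto)
  finally show "mu3S \<le> ereal (3 / 2 powr (2/3))" by (simp add: \<beta>_def)
qed

end
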